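(* For every integer $m \geq 3$, $\gamma_{b,2}(P_m \square C_3) = \left\lceil \frac{2m}{3} \right\rceil$.
   Context: For a graph $G$, a $2$-limited broadcast is a function $f: V(G) \to \{0,1,2\}$. A vertex $u$ hears the broadcast from $v$ if $f(v) > 0$ and $d(u,v) \leq f(v)$, where $d$ is the distance in $G$. The broadcast $f$ is dominating if every vertex of $G$ hears the broadcast from some vertex. The cost of $f$ is $\sum_{v \in V(G)} f(v)$. The $2$-limited broadcast domination number $\gamma_{b,2}(G)$ is the minimum cost of a $2$-limited dominating broadcast on $G$. $C_n$ denotes the cycle on $n$ vertices, $P_m$ the path on $m$ vertices, and $\square$ the Cartesian product of graphs. *)

theory Defs
  imports Complex_Main
begin

text \<open>A graph is given by a vertex set V and a symmetric adjacency relation E.\<close>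

definition walk :: "'a set \<Rightarrow> ('a \<Rightarrow> 'a \<Rightarrow> bool) \<Rightarrow> 'a list \<Rightarrow> bool" where
  "walk V E xs \<longleftrightarrow> xs \<noteq> [] \<and> set xs \<subseteq> V \<and> (\<forall>i. Suc i < length xs \<longrightarrow> E (xs ! i) (xs ! Suc i))"

text \<open>Graph distance: least length of a walk from u to v (all graphs considered are connected).\<close>
definition gdist :: "'a set \<Rightarrow> ('a \<Rightarrow> 'a \<Rightarrow> bool) \<Rightarrow> 'a \<Rightarrow> 'a \<Rightarrow> nat" where
  "gdist V E u v = (LEAST n. \<exists>xs. walk V E xs \<and> hd xs = u \<and> last xs = v \<and> length xs = Suc n)"

definition hears :: "'a set \<Rightarrow> ('a \<Rightarrow> 'a \<Rightarrow> bool) \<Rightarrow> ('a \<Rightarrow> nat) \<Rightarrow> 'a \<Rightarrow> 'a \<Rightarrow> bool" where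
  "hears V E f u v \<longleftrightarrow> f v > 0 \<and> gdist V E u v \<le> f v"

definition dominating_2lb :: "'a set \<Rightarrow> ('a \<Rightarrow> 'a \<Rightarrow> bool) \<Rightarrow> ('a \<Rightarrow> nat) \<Rightarrow> bool" where
  "dominating_2lb V E f \<longleftrightarrow> (\<forall>v\<in>V. f v \<le> 2) \<and> (\<forall>u\<in>V. \<exists>v\<in>V. hears V E f u v)"

definition bcost :: "'a set \<Rightarrow> ('a \<Rightarrow> nat) \<Rightarrow> nat" where
  "bcost V f = (\<Sum>v\<in>V. f v)"

definition gamma_b2 :: "'a set \<Rightarrow> ('a \<Rightarrow> 'a \<Rightarrow> bool) \<Rightarrow> nat" where
  "gamma_b2 V E = (LEAST c. \<exists>f. dominating_2lb V E f \<and> bcost V f = c)"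

definition path_V :: "nat \<Rightarrow> nat set" where "path_V m = {0..<m}"
definition path_E :: "nat \<Rightarrow> nat \<Rightarrow> bool" where "path_E i j \<longleftrightarrow> j = i + 1 \<or> i = j + 1"
definition cycle_V :: "nat \<Rightarrow> nat set" where "cycle_V n = {0..<n}"
definition cycle_E :: "nat \<Rightarrow> nat \<Rightarrow> nat \<Rightarrow> bool" where
  "cycle_E n i j \<longleftrightarrow> i < n \<and> j < n \<and> (j = (i + 1) mod n \<or> i = (j + 1) mod n)"

definition cart_V :: "'a set \<Rightarrow> 'b set \<Rightarrow> ('a \<times> 'b) set" where "cart_V V1 V2 = V1 \<times> V2"
definition cart_E :: "('a \<Rightarrow> 'a \<Rightarrow> bool) \<Rightarrow> ('b \<Rightarrow> 'b \<Rightarrow> bool) \<Rightarrow> 'a \<times> 'b \<Rightarrow> 'a \<times> 'b \<Rightarrow> bool" where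
  "cart_E E1 E2 x y \<longleftrightarrow> (fst x = fst y \<and> E2 (snd x) (snd y)) \<or> (snd x = snd y \<and> E1 (fst x) (fst y))"

end

theory Submission
  imports Defs
begin


abbreviation GV :: "nat \<Rightarrow> (nat \<times> nat) set" where "GV m \<equiv> cart_V (path_V m) (cycle_V 3)"
abbreviation GE :: "nat \<times> nat \<Rightarrow> nat \<times> nat \<Rightarrow> bool" where "GE \<equiv> cart_E path_E (cycle_E 3)"

lemma GV_eq: "GV m = {0..<m} \<times> {0..<3}"
  by (simp add: cart_V_def path_V_def cycle_V_def)

lemma lt3: "(i::nat) < 3 \<longleftrightarrow> i = 0 \<or> i = 1 \<or> i = 2" by auto
lemma cyc3: "cycle_E 3 i j \<longleftrightarrow> i < 3 \<and> j < 3 \<and> i \<noteq> j"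
  unfolding cycle_E_def lt3 by auto

lemma GE_iff: "GE x y \<longleftrightarrow> (fst x = fst y \<and> snd x < 3 \<and> snd y < 3 \<and> snd x \<noteq> snd y) \<or> (snd x = snd y \<and> (fst y = fst x + 1 \<or> fst x = fst y + 1))"
  by (auto simp: cart_E_def cyc3 path_E_def)

definition dd :: "nat \<times> nat \<Rightarrow> nat \<times> nat \<Rightarrow> nat" where
  "dd x y = nat \<bar>int (fst x) - int (fst y)\<bar> + (if snd x = snd y then 0 else 1)"

lemma dd_tri: "dd x z \<le> dd x y + dd y z"
  unfolding dd_def by auto

lemma dd_E: "GE x y \<Longrightarrow> dd x y \<le> 1"
  unfolding dd_def GE_iff by auto

lemma walk_Cons: "walk V E (x # xs) \<longleftrightarrow> x \<in> V \<and> (xs = [] \<or> (E x (hd xs) \<and> walk V E xs))"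
proof
  assume w: "walk V E (x # xs)"
  show "x \<in> V \<and> (xs = [] \<or> (E x (hd xs) \<and> walk V E xs))"
  proof (cases xs)
    case Nil then show ?thesis using w by (simp add: walk_def)
  next
    case (Cons y ys)
    have "E x y" using w[unfolded walk_def, THEN conjunct2, THEN conjunct2, rule_format, of 0] Cons by simp
    moreover have "walk V E xs" unfolding walk_def using w Cons
      by (auto simp: walk_def)
    ultimately show ?thesis using w Cons by (simp add: walk_def)
  qed
next
  assume a: "x \<in> V \<and> (xs = [] \<or> (E x (hd xs) \<and> walk V E xs))"
  show "walk V E (x # xs)"
  proof (cases xs)
    case Nil then show ?thesis using a by (simp add: walk_def)
  next
    case (Cons y ys)
    show ?thesis unfolding walk_def
    proof (intro conjI allI impI)
      show "x # xs \<noteq> []" by simp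
      show "set (x # xs) \<subseteq> V" using a Cons by (auto simp: walk_def)
      fix i assume "Suc i < length (x # xs)"
      then show "E ((x # xs) ! i) ((x # xs) ! Suc i)"
        using a Cons by (cases i) (auto simp: walk_def)
    qed
  qed
qed

lemma walk_dd: "walk (GV m) GE xs \<Longrightarrow> dd (hd xs) (last xs) \<le> length xs - 1"
proof (induction xs)
  case Nil then show ?case by (simp add: walk_def)
next
  case (Cons x ys)
  show ?case
  proof (cases ys)
    case Nil then show ?thesis by (simp add: dd_def)
  next
    case (Cons y zs)
    have h: "GE x (hd ys)" "walk (GV m) GE ys" using Cons.prems Cons by (auto simp: walk_Cons)
    have "dd x (last ys) \<le> dd x (hd ys) + dd (hd ys) (last ys)" by (rule dd_tri)
    also have "\<dots> \<le> 1 + (length ys - 1)" using dd_E[OF h(1)] Cons.IH[OF h(2)] by simp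
    finally show ?thesis using Cons by simp
  qed
qed

lemma walk_col:
  assumes "a < m" "b < m" "r < 3"
  shows "\<exists>xs. walk (GV m) GE xs \<and> hd xs = (a, r) \<and> last xs = (b, r) \<and> length xs = Suc (nat \<bar>int a - int b\<bar>)"
proof (cases "a \<le> b")
  case True
  let ?xs = "map (\<lambda>i. (a + i, r)) [0..<Suc (b - a)]"
  have "walk (GV m) GE ?xs" unfolding walk_def GV_eq GE_iff using assms True
    by (auto simp del: upt_Suc simp: nth_append)
  moreover have "hd ?xs = (a, r)" by (simp del: upt_Suc add: hd_map hd_upt)
  moreover have "last ?xs = (b, r)" using True by (simp add: last_map)
  moreover have "length ?xs = Suc (nat \<bar>int a - int b\<bar>)" using True by simp
  ultimately show ?thesis by blast
next
  case False
  let ?xs = "map (\<lambda>i. (a - i, r)) [0..<Suc (a - b)]"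
  have "walk (GV m) GE ?xs" unfolding walk_def GV_eq GE_iff using assms False
    by (auto simp del: upt_Suc simp: nth_append)
  moreover have "hd ?xs = (a, r)" by (simp del: upt_Suc add: hd_map hd_upt)
  moreover have "last ?xs = (b, r)" using False by (simp add: last_map)
  moreover have "length ?xs = Suc (nat \<bar>int a - int b\<bar>)" using False by simp
  ultimately show ?thesis by blast
qed

lemma gdist_eq:
  assumes "u \<in> GV m" "v \<in> GV m"
  shows "gdist (GV m) GE u v = dd u v"
  unfolding gdist_def
proof (rule Least_equality)
  obtain a r b s where u: "u = (a, r)" and v: "v = (b, s)" by (cases u, cases v)
  have ab: "a < m" "b < m" "r < 3" "s < 3" using assms u v GV_eq by auto
  show "\<exists>xs. walk (GV m) GE xs \<and> hd xs = u \<and> last xs = v \<and> length xs = Suc (dd u v)"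
  proof (cases "r = s")
    case True
    then show ?thesis using walk_col[OF ab(1,2,3)] u v by (simp add: dd_def)
  next
    case False
    obtain xs where xs: "walk (GV m) GE xs" "hd xs = (a, s)" "last xs = (b, s)"
        "length xs = Suc (nat \<bar>int a - int b\<bar>)"
      using walk_col[OF ab(1,2,4)] by blast
    have "walk (GV m) GE ((a, r) # xs)" using xs ab False
      by (subst walk_Cons) (auto simp: GV_eq GE_iff)
    moreover have "xs \<noteq> []" using xs by auto
    ultimately show ?thesis using xs u v False
      by (intro exI[of _ "(a, r) # xs"]) (auto simp: dd_def)
  qed
next
  fix n assume "\<exists>xs. walk (GV m) GE xs \<and> hd xs = u \<and> last xs = v \<and> length xs = Suc n"
  then obtain xs where "walk (GV m) GE xs" "hd xs = u" "last xs = v" "length xs = Suc n" by blast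
  then show "dd u v \<le> n" using walk_dd by fastforce
qed



definition ind :: "bool \<Rightarrow> nat" where "ind b = (if b then 1 else 0)"

definition own :: "(int \<Rightarrow> nat \<Rightarrow> nat) \<Rightarrow> int \<Rightarrow> nat" where
  "own F c = (\<Sum>r<3. ind (1 \<le> F c r) + ind (F (c - 1) r = 2) + ind (F (c + 1) r = 2))"
definition n1 :: "(int \<Rightarrow> nat \<Rightarrow> nat) \<Rightarrow> int \<Rightarrow> nat" where
  "n1 F c = (\<Sum>r<3. ind (F c r = 1))"
definition n2 :: "(int \<Rightarrow> nat \<Rightarrow> nat) \<Rightarrow> int \<Rightarrow> nat" where
  "n2 F c = (\<Sum>r<3. ind (F c r = 2))"
definition UU :: "(int \<Rightarrow> nat \<Rightarrow> nat) \<Rightarrow> int \<Rightarrow> int \<Rightarrow> bool" where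
  "UU F M c \<longleftrightarrow> 0 \<le> c \<and> c < M \<and> own F c = 0"
definition ex :: "(int \<Rightarrow> nat \<Rightarrow> nat) \<Rightarrow> int \<Rightarrow> int \<Rightarrow> real" where
  "ex F M c = (if 0 \<le> c \<and> c < M then max (real (own F c) - 1) 0 else 0)"
definition clL :: "(int \<Rightarrow> nat \<Rightarrow> nat) \<Rightarrow> int \<Rightarrow> int \<Rightarrow> real" where
  "clL F M c = (if UU F M c then ex F M (c - 1) * (if UU F M (c - 2) then 1/2 else 1) else 0)"
definition clR :: "(int \<Rightarrow> nat \<Rightarrow> nat) \<Rightarrow> int \<Rightarrow> int \<Rightarrow> real" where
  "clR F M c = (if UU F M c then ex F M (c + 1) * (if UU F M (c + 2) then 1/2 else 1) else 0)"

lemma ex_nonneg: "ex F M c \<ge> 0" by (simp add: ex_def)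

lemma own_split:
  assumes "\<And>c r. F c r \<le> 2"
  shows "own F c = n1 F c + n2 F c + n2 F (c - 1) + n2 F (c + 1)"
proof -
  have "\<And>r. ind (1 \<le> F c r) = ind (F c r = 1) + ind (F c r = 2)"
    using assms[of c] by (auto simp: ind_def) (metis le_antisym not_less_eq_eq numeral_2_eq_2)
  then show ?thesis unfolding own_def n1_def n2_def by (simp add: sum.distrib)
qed

lemma pair: "clR F M (d - 1) + clL F M (d + 1) \<le> ex F M d"
proof -
  have e: "ex F M d \<ge> 0" by (rule ex_nonneg)
  show ?thesis unfolding clR_def clL_def by (auto simp: algebra_simps e)
qed

lemma arith_final:
  fixes l1 l2 r1 r2 :: nat and xL xR hL hR :: real
  assumes "l1 + l2 + r1 + r2 \<ge> 3" "xL \<ge> real l1 + real l2 - 1" "xL \<ge> 0"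
    "xR \<ge> real r1 + real r2 - 1" "xR \<ge> 0"
    "l2 > 0 \<Longrightarrow> hL = 1" "hL = 1 \<or> hL = 1/2" "r2 > 0 \<Longrightarrow> hR = 1" "hR = 1 \<or> hR = 1/2"
  shows "1 \<le> xL * hL + xR * hR + (real l1 + real r1) / 4"
proof (cases "l1 + l2 \<ge> 2")
  case True
  have "xR * hR \<ge> 0" using assms(5,9) by auto
  moreover have "1 \<le> xL * hL + real l1 / 4"
  proof (cases "l2 > 0")
    case True then show ?thesis using assms `l1 + l2 \<ge> 2` by auto
  next
    case False then have "l1 \<ge> 2" using `l1 + l2 \<ge> 2` by auto
    have l1r: "real l1 \<ge> 2" using `l1 \<ge> 2` by simp
    show ?thesis using assms(7)
    proof
      assume "hL = 1" then show ?thesis using assms(2) l1r by simp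
    next
      assume "hL = 1/2" then have "xL * hL = xL / 2" by simp
      then show ?thesis using assms(2) l1r by linarith
    qed
  qed
  ultimately show ?thesis by (simp add: add_divide_distrib)
next
  case False
  then have "r1 + r2 \<ge> 2" using assms(1) by auto
  have "xL * hL \<ge> 0" using assms(3,7) by auto
  moreover have "1 \<le> xR * hR + real r1 / 4"
  proof (cases "r2 > 0")
    case True then show ?thesis using assms `r1 + r2 \<ge> 2` by auto
  next
    case False then have "r1 \<ge> 2" using `r1 + r2 \<ge> 2` by auto
    have r1r: "real r1 \<ge> 2" using `r1 \<ge> 2` by simp
    show ?thesis using assms(9)
    proof
      assume "hR = 1" then show ?thesis using assms(4) r1r by simp
    next
      assume "hR = 1/2" then have "xR * hR = xR / 2" by simp
      then show ?thesis using assms(4) r1r by linarith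
    qed
  qed
  ultimately show ?thesis by (simp add: add_divide_distrib)
qed

lemma sum_pos_ex: "(\<Sum>r::nat<3. ind (P r)) > 0 \<Longrightarrow> \<exists>r<3. P r"
  by (metis (mono_tags, lifting) ind_def lessThan_iff less_numeral_extra(3) sum.neutral)

lemma local_unowned:
  assumes Fz: "\<And>c r. c < 0 \<or> c \<ge> M \<Longrightarrow> F c r = 0"
    and U: "UU F M c"
    and rows: "\<And>r. r < 3 \<Longrightarrow> 1 \<le> ind (F (c - 1) r = 1) + ind (F (c + 1) r = 1) + ind (F (c - 2) r = 2) + ind (F (c + 2) r = 2)"
  shows "1 \<le> clL F M c + clR F M c + (real (n1 F (c - 1)) + real (n1 F (c + 1))) / 4"
proof -
  define l1 where "l1 = n1 F (c - 1)"
  define l2 where "l2 = n2 F (c - 2)"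
  define r1 where "r1 = n1 F (c + 1)"
  define r2 where "r2 = n2 F (c + 2)"
  have c: "0 \<le> c" "c < M" using U by (auto simp: UU_def)
  have "(\<Sum>r::nat<3. (1::nat)) \<le> (\<Sum>r<3. ind (F (c - 1) r = 1) + ind (F (c + 1) r = 1) + ind (F (c - 2) r = 2) + ind (F (c + 2) r = 2))"
    by (rule sum_mono) (use rows in auto)
  then have s3: "l1 + l2 + r1 + r2 \<ge> 3" unfolding l1_def l2_def r1_def r2_def n1_def n2_def
    by (simp add: sum.distrib)
  have ownL: "own F (c - 1) \<ge> l1 + l2"
  proof -
    have "l1 + l2 = (\<Sum>r<3. ind (F (c - 1) r = 1) + ind (F (c - 1 - 1) r = 2))"
      unfolding l1_def l2_def n1_def n2_def by (simp add: sum.distrib)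
    also have "\<dots> \<le> own F (c - 1)" unfolding own_def
      by (rule sum_mono) (auto simp: ind_def)
    finally show ?thesis .
  qed
  have ownR: "own F (c + 1) \<ge> r1 + r2"
  proof -
    have "r1 + r2 = (\<Sum>r<3. ind (F (c + 1) r = 1) + ind (F (c + 1 + 1) r = 2))"
      unfolding r1_def r2_def n1_def n2_def by (simp add: sum.distrib add.commute)
    also have "\<dots> \<le> own F (c + 1)" unfolding own_def
      by (rule sum_mono) (auto simp: ind_def)
    finally show ?thesis .
  qed
  have xL: "ex F M (c - 1) \<ge> real l1 + real l2 - 1"
  proof (cases "0 \<le> c - 1")
    case True then show ?thesis using c ownL by (auto simp: ex_def)
  next
    case False
    then have "l1 = 0" "l2 = 0" unfolding l1_def l2_def n1_def n2_def using Fz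
      by (auto simp: ind_def)
    then show ?thesis using ex_nonneg[of F M "c - 1"] by simp
  qed
  have xR: "ex F M (c + 1) \<ge> real r1 + real r2 - 1"
  proof (cases "c + 1 < M")
    case True then show ?thesis using c ownR by (auto simp: ex_def)
  next
    case False
    then have "r1 = 0" "r2 = 0" unfolding r1_def r2_def n1_def n2_def using Fz
      by (auto simp: ind_def)
    then show ?thesis using ex_nonneg[of F M "c + 1"] by simp
  qed
  have hL: "\<not> UU F M (c - 2)" if l2pos: "l2 > 0"
  proof -
    obtain r where r: "r < 3" "F (c - 2) r = 2" using sum_pos_ex[of "\<lambda>r. F (c - 2) r = 2"] l2pos unfolding l2_def n2_def by blast
    have "ind (1 \<le> F (c - 2) r) + ind (F (c - 2 - 1) r = 2) + ind (F (c - 2 + 1) r = 2) \<le> own F (c - 2)"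
      unfolding own_def by (rule member_le_sum) (use r in auto)
    then have "own F (c - 2) > 0" using r by (auto simp: ind_def)
    then show ?thesis by (simp add: UU_def)
  qed
  have hR: "\<not> UU F M (c + 2)" if r2pos: "r2 > 0"
  proof -
    obtain r where r: "r < 3" "F (c + 2) r = 2" using sum_pos_ex[of "\<lambda>r. F (c + 2) r = 2"] r2pos unfolding r2_def n2_def by blast
    have "ind (1 \<le> F (c + 2) r) + ind (F (c + 2 - 1) r = 2) + ind (F (c + 2 + 1) r = 2) \<le> own F (c + 2)"
      unfolding own_def by (rule member_le_sum) (use r in auto)
    then have "own F (c + 2) > 0" using r by (auto simp: ind_def)
    then show ?thesis by (simp add: UU_def)
  qed
  have "1 \<le> ex F M (c - 1) * (if UU F M (c - 2) then 1/2 else 1) + ex F M (c + 1) * (if UU F M (c + 2) then 1/2 else 1) + (real l1 + real r1) / 4"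
    by (rule arith_final[OF s3 xL ex_nonneg xR ex_nonneg]) (use hL hR in auto)
  then show ?thesis using U unfolding clL_def clR_def l1_def r1_def by simp
qed

lemma pointwise:
  assumes Fz: "\<And>c r. c < 0 \<or> c \<ge> M \<Longrightarrow> F c r = 0"
    and c: "0 \<le> c" "c < M"
    and rows: "UU F M c \<Longrightarrow> (\<And>r. r < 3 \<Longrightarrow> 1 \<le> ind (F (c - 1) r = 1) + ind (F (c + 1) r = 1) + ind (F (c - 2) r = 2) + ind (F (c + 2) r = 2))"
  shows "1 \<le> real (own F c) - ex F M c + clL F M c + clR F M c + (real (n1 F (c - 1)) + real (n1 F (c + 1))) / 4"
proof (cases "UU F M c")
  case True
  then have "own F c = 0" "ex F M c = 0" by (auto simp: UU_def ex_def)
  then show ?thesis using local_unowned[OF Fz True rows[OF True]] by simp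
next
  case False
  then have "own F c \<ge> 1" using c by (auto simp: UU_def)
  then have "real (own F c) - ex F M c = 1" using c by (auto simp: ex_def)
  moreover have "clL F M c \<ge> 0" "clR F M c \<ge> 0" unfolding clL_def clR_def
    using ex_nonneg by auto
  ultimately show ?thesis by simp
qed

lemma shiftm: "(\<Sum>c<m. G (int c - 1)) + G (int m - 1) = (\<Sum>c<m. G (int c)) + (G (-1) :: real)"
  by (induction m) (auto simp: algebra_simps)

lemma shiftp: "(\<Sum>c<m. G (int c + 1)) + G 0 = (\<Sum>c<m. G (int c)) + (G (int m) :: real)"
  by (induction m) (auto simp: algebra_simps)

lemma n_zero:
  assumes Fz: "\<And>c r. c < 0 \<or> c \<ge> M \<Longrightarrow> F c r = 0" and "c < 0 \<or> c \<ge> M"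
  shows "n1 F c = 0" "n2 F c = 0"
  using Fz[OF assms(2)] by (auto simp: n1_def n2_def ind_def)

lemma lin:
  fixes x Ow X L R A B g1 g2 p q :: real
  shows "x \<le> Ow - X + L + R + (A + B) / 4 \<Longrightarrow> Ow = g1 + g2 + p + q \<Longrightarrow> A \<le> g1 \<Longrightarrow> B \<le> g1 \<Longrightarrow>
    p \<le> g2 \<Longrightarrow> q \<le> g2 \<Longrightarrow> L + R \<le> X \<Longrightarrow> x \<le> 3/2 * (g1 + 2 * g2)"
  by argo

lemma lower_F:
  assumes Fb: "\<And>c r. F c r \<le> 2"
    and Fz: "\<And>c r. c < 0 \<or> c \<ge> int m \<Longrightarrow> F c r = 0"
    and rows: "\<And>c r. 0 \<le> c \<Longrightarrow> c < int m \<Longrightarrow> UU F (int m) c \<Longrightarrow> r < 3 \<Longrightarrow>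
       1 \<le> ind (F (c - 1) r = 1) + ind (F (c + 1) r = 1) + ind (F (c - 2) r = 2) + ind (F (c + 2) r = 2)"
  shows "real m \<le> 3/2 * (\<Sum>c<m. real (n1 F (int c)) + 2 * real (n2 F (int c)))"
proof -
  define M where "M = int m"
  define G1 where "G1 = (\<lambda>c. real (n1 F c))"
  define G2 where "G2 = (\<lambda>c. real (n2 F c))"
  have FzM: "\<And>c r. c < 0 \<or> c \<ge> M \<Longrightarrow> F c r = 0" using Fz M_def by auto
  have pt: "1 \<le> real (own F (int c)) - ex F M (int c) + clL F M (int c) + clR F M (int c) + (G1 (int c - 1) + G1 (int c + 1)) / 4" if "c < m" for c
    unfolding G1_def by (rule pointwise[OF FzM]) (use that rows M_def in auto)
  have "real m = (\<Sum>c<m. (1::real))" by simp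
  also have "\<dots> \<le> (\<Sum>c<m. real (own F (int c)) - ex F M (int c) + clL F M (int c) + clR F M (int c) + (G1 (int c - 1) + G1 (int c + 1)) / 4)"
    by (rule sum_mono) (use pt in auto)
  also have "\<dots> = (\<Sum>c<m. real (own F (int c))) - (\<Sum>c<m. ex F M (int c)) + (\<Sum>c<m. clL F M (int c)) + (\<Sum>c<m. clR F M (int c))
       + ((\<Sum>c<m. G1 (int c - 1)) + (\<Sum>c<m. G1 (int c + 1))) / 4"
    by (simp add: sum.distrib sum_subtractf sum_divide_distrib[symmetric])
  finally have main: "real m \<le> (\<Sum>c<m. real (own F (int c))) - (\<Sum>c<m. ex F M (int c)) + (\<Sum>c<m. clL F M (int c)) + (\<Sum>c<m. clR F M (int c))
       + ((\<Sum>c<m. G1 (int c - 1)) + (\<Sum>c<m. G1 (int c + 1))) / 4" .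
  have ownsum: "(\<Sum>c<m. real (own F (int c))) = (\<Sum>c<m. G1 (int c)) + (\<Sum>c<m. G2 (int c)) + (\<Sum>c<m. G2 (int c - 1)) + (\<Sum>c<m. G2 (int c + 1))"
    unfolding G1_def G2_def own_split[OF Fb] by (simp add: sum.distrib)
  have z: "G1 (-1) = 0" "G2 (-1) = 0" "G1 M = 0" "G2 M = 0" unfolding G1_def G2_def
    using n_zero[OF FzM] by auto
  have nn: "G1 x \<ge> 0" "G2 x \<ge> 0" for x unfolding G1_def G2_def by auto
  have s1: "(\<Sum>c<m. G1 (int c - 1)) \<le> (\<Sum>c<m. G1 (int c))"
    using shiftm[of G1 m] z[unfolded M_def] nn[of "int m - 1"] by linarith
  have s2: "(\<Sum>c<m. G1 (int c + 1)) \<le> (\<Sum>c<m. G1 (int c))"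
    using shiftp[of G1 m] z[unfolded M_def] nn[of 0] by linarith
  have s3: "(\<Sum>c<m. G2 (int c - 1)) \<le> (\<Sum>c<m. G2 (int c))"
    using shiftm[of G2 m] z[unfolded M_def] nn[of "int m - 1"] by linarith
  have s4: "(\<Sum>c<m. G2 (int c + 1)) \<le> (\<Sum>c<m. G2 (int c))"
    using shiftp[of G2 m] z[unfolded M_def] nn[of 0] by linarith
  have cz: "clR F M (M - 1) = 0" "clR F M (-1) = 0" "clL F M 0 = 0" "clL F M M = 0"
    unfolding clR_def clL_def by (auto simp: UU_def ex_def)
  have c1: "(\<Sum>c<m. clR F M (int c - 1)) = (\<Sum>c<m. clR F M (int c))"
    using shiftm[of "clR F M" m] cz M_def by simp
  have c2: "(\<Sum>c<m. clL F M (int c + 1)) = (\<Sum>c<m. clL F M (int c))"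
    using shiftp[of "clL F M" m] cz M_def by simp
  have "(\<Sum>c<m. clR F M (int c - 1) + clL F M (int c + 1)) \<le> (\<Sum>c<m. ex F M (int c))"
    by (rule sum_mono) (rule pair)
  then have cl: "(\<Sum>c<m. clL F M (int c)) + (\<Sum>c<m. clR F M (int c)) \<le> (\<Sum>c<m. ex F M (int c))"
    using c1 c2 by (simp add: sum.distrib)
  have "real m \<le> 3/2 * ((\<Sum>c<m. G1 (int c)) + 2 * (\<Sum>c<m. G2 (int c)))"
    by (rule lin[OF main ownsum s1 s2 s3 s4 cl])
  then show ?thesis unfolding G1_def G2_def by (simp add: sum.distrib sum_distrib_left)
qed



definition Fof :: "nat \<Rightarrow> (nat \<times> nat \<Rightarrow> nat) \<Rightarrow> int \<Rightarrow> nat \<Rightarrow> nat" where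
  "Fof m f c r = (if 0 \<le> c \<and> c < int m \<and> r < 3 then f (nat c, r) else 0)"

lemma sum3: "(\<Sum>r::nat<3. g r) = g 0 + g 1 + (g 2 :: 'a :: comm_monoid_add)"
  by (simp add: numeral_3_eq_3 numeral_2_eq_2 lessThan_Suc add_ac)

lemma own0:
  assumes "own F c = 0" "r < 3"
  shows "F c r = 0" "F (c - 1) r \<noteq> 2" "F (c + 1) r \<noteq> 2"
  using assms unfolding own_def sum3 by (auto simp: ind_def lt3 split: if_splits)

lemma rows_dom:
  assumes dom: "dominating_2lb (GV m) GE f" and n: "n < m" and U: "own (Fof m f) (int n) = 0" and r: "r < 3"
  shows "1 \<le> ind (Fof m f (int n - 1) r = 1) + ind (Fof m f (int n + 1) r = 1) + ind (Fof m f (int n - 2) r = 2) + ind (Fof m f (int n + 2) r = 2)"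
proof -
  let ?F = "Fof m f"
  have uV: "(n, r) \<in> GV m" using n r by (simp add: GV_eq)
  then obtain v where v: "v \<in> GV m" "hears (GV m) GE f (n, r) v" using dom by (auto simp: dominating_2lb_def)
  obtain a b where ab: "v = (a, b)" by (cases v)
  have abV: "a < m" "b < 3" using v ab by (auto simp: GV_eq)
  have f2: "f (a, b) \<le> 2" using dom v ab by (auto simp: dominating_2lb_def)
  have fpos: "0 < f (a, b)" and d: "dd (n, r) (a, b) \<le> f (a, b)"
    using v ab gdist_eq[OF uV v(1)] by (auto simp: hears_def)
  have d': "nat \<bar>int n - int a\<bar> + (if r = b then 0 else 1) \<le> f (a, b)" using d by (simp add: dd_def)
  have fa: "?F (int a) b = f (a, b)" using abV by (simp add: Fof_def)
  have o: "?F (int n) b = 0" "?F (int n - 1) b \<noteq> 2" "?F (int n + 1) b \<noteq> 2" using own0[OF U abV(2)] by auto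
  have "int a = int n - 2 \<or> int a = int n - 1 \<or> int a = int n \<or> int a = int n + 1 \<or> int a = int n + 2"
    using d' f2 by linarith
  then show ?thesis
  proof (elim disjE)
    assume h: "int a = int n - 2"
    have fa': "?F (int n - 2) b = f (a, b)" using fa h by simp
    have "nat \<bar>int n - int a\<bar> = 2" using h by simp
    then have "f (a, b) = 2" "r = b" using d' f2 by (auto split: if_splits)
    then show ?thesis using fa' by (simp add: ind_def)
  next
    assume h: "int a = int n - 1"
    have fa': "?F (int n - 1) b = f (a, b)" using fa h by simp
    have "f (a, b) \<noteq> 2" using o(2) fa' by simp
    then have f1: "f (a, b) = 1" using f2 fpos by linarith
    have "nat \<bar>int n - int a\<bar> = 1" using h by simp
    then have "r = b" using d' f1 by (auto split: if_splits)
    then show ?thesis using fa' f1 by (simp add: ind_def)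
  next
    assume h: "int a = int n"
    then show ?thesis using fa o fpos by simp
  next
    assume h: "int a = int n + 1"
    have fa': "?F (int n + 1) b = f (a, b)" using fa h by simp
    have "f (a, b) \<noteq> 2" using o(3) fa' by simp
    then have f1: "f (a, b) = 1" using f2 fpos by linarith
    have "nat \<bar>int n - int a\<bar> = 1" using h by simp
    then have "r = b" using d' f1 by (auto split: if_splits)
    then show ?thesis using fa' f1 by (simp add: ind_def)
  next
    assume h: "int a = int n + 2"
    have fa': "?F (int n + 2) b = f (a, b)" using fa h by simp
    have "nat \<bar>int n - int a\<bar> = 2" using h by simp
    then have "f (a, b) = 2" "r = b" using d' f2 by (auto split: if_splits)
    then show ?thesis using fa' by (simp add: ind_def)
  qed
qed

lemma cost_eq:
  assumes f2: "\<And>v. v \<in> GV m \<Longrightarrow> f v \<le> 2"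
  shows "bcost (GV m) f = (\<Sum>c<m. n1 (Fof m f) (int c) + 2 * n2 (Fof m f) (int c))"
proof -
  have "bcost (GV m) f = (\<Sum>c<m. \<Sum>r<3. f (c, r))"
    unfolding bcost_def GV_eq by (simp add: sum.cartesian_product atLeast0LessThan)
  also have "\<dots> = (\<Sum>c<m. n1 (Fof m f) (int c) + 2 * n2 (Fof m f) (int c))"
  proof (rule sum.cong)
    fix c assume c: "c \<in> {..<m}"
    have "\<And>r::nat. r < 3 \<Longrightarrow> f (c, r) = ind (Fof m f (int c) r = 1) + 2 * ind (Fof m f (int c) r = 2)"
    proof -
      fix r :: nat assume r: "r < 3"
      have "f (c, r) \<le> 2" using f2 c r by (auto simp: GV_eq)
      then show "f (c, r) = ind (Fof m f (int c) r = 1) + 2 * ind (Fof m f (int c) r = 2)"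
        using c r by (auto simp: Fof_def ind_def)
    qed
    then show "(\<Sum>r<3. f (c, r)) = n1 (Fof m f) (int c) + 2 * n2 (Fof m f) (int c)"
      unfolding n1_def n2_def sum3 by simp
  qed simp
  finally show ?thesis .
qed

lemma rows_int:
  assumes dom: "dominating_2lb (GV m) GE f" and c: "0 \<le> c" "c < int m" and U: "UU (Fof m f) (int m) c" and r: "r < 3"
  shows "1 \<le> ind (Fof m f (c - 1) r = 1) + ind (Fof m f (c + 1) r = 1) + ind (Fof m f (c - 2) r = 2) + ind (Fof m f (c + 2) r = 2)"
proof -
  obtain n where cn: "c = int n" using c(1) nonneg_int_cases by blast
  have n: "n < m" using c(2) cn by simp
  have o: "own (Fof m f) (int n) = 0" using U cn by (simp add: UU_def)
  show ?thesis using rows_dom[OF dom n o r] cn by simp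
qed

lemma Fof_le2:
  assumes dom: "dominating_2lb (GV m) GE f"
  shows "Fof m f c r \<le> 2"
proof (cases "0 \<le> c \<and> c < int m \<and> r < 3")
  case True
  then have "(nat c, r) \<in> GV m" by (auto simp: GV_eq)
  then show ?thesis using dom True by (auto simp: dominating_2lb_def Fof_def)
next
  case False then show ?thesis unfolding Fof_def by auto
qed

lemma Fof_z: "c < 0 \<or> c \<ge> int m \<Longrightarrow> Fof m f c r = 0"
  by (auto simp: Fof_def)

lemma lower:
  assumes dom: "dominating_2lb (GV m) GE f"
  shows "2 * m \<le> 3 * bcost (GV m) f"
proof -
  have f2: "\<And>v. v \<in> GV m \<Longrightarrow> f v \<le> 2" using dom by (auto simp: dominating_2lb_def)
  have ce: "real (bcost (GV m) f) = (\<Sum>c<m. real (n1 (Fof m f) (int c)) + 2 * real (n2 (Fof m f) (int c)))"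
    using of_nat_sum[of "\<lambda>c. n1 (Fof m f) (int c) + 2 * n2 (Fof m f) (int c)" "{..<m}"] cost_eq[OF f2] by simp
  have "real m \<le> 3/2 * (\<Sum>c<m. real (n1 (Fof m f) (int c)) + 2 * real (n2 (Fof m f) (int c)))"
    by (rule lower_F[OF Fof_le2[OF dom] Fof_z rows_int[OF dom]])
  also have "\<dots> = 3/2 * real (bcost (GV m) f)"
    using ce by simp
  finally have "real (2 * m) \<le> real (3 * bcost (GV m) f)" by simp
  then show ?thesis by (simp only: of_nat_le_iff)
qed

definition f0 :: "nat \<Rightarrow> nat \<times> nat \<Rightarrow> nat" where
  "f0 m x = (if snd x = 0 \<and> fst x < m then (if fst x mod 3 = 1 then 2 else if fst x = m - 1 \<and> fst x mod 3 = 0 then 1 else 0) else 0)"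

lemma f0_dom: "dominating_2lb (GV m) GE (f0 m)"
  unfolding dominating_2lb_def
proof (intro conjI ballI)
  fix v assume "v \<in> GV m" then show "f0 m v \<le> 2" by (auto simp: f0_def)
next
  fix u assume u: "u \<in> GV m"
  obtain c r where cr: "u = (c, r)" by (cases u)
  have cm: "c < m" "r < 3" using u cr by (auto simp: GV_eq)
  have hz: "hears (GV m) GE (f0 m) u (a, 0)" if "a < m" "0 < f0 m (a, 0)" "dd (c, r) (a, 0) \<le> f0 m (a, 0)" for a
    using that u cr gdist_eq[OF u, of "(a, 0)"] by (auto simp: hears_def GV_eq)
  have inV: "(a, 0) \<in> GV m" if "a < m" for a using that by (simp add: GV_eq)
  consider "c mod 3 = 1" | "c mod 3 = 0" "c + 1 < m" | "c mod 3 = 0" "c + 1 = m" | "c mod 3 = 2" using cm by linarith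
  then show "\<exists>v\<in>GV m. hears (GV m) GE (f0 m) u v"
  proof cases
    case 1
    then have "f0 m (c, 0) = 2" using cm by (simp add: f0_def)
    moreover have "dd (c, r) (c, 0) \<le> 2" by (simp add: dd_def)
    ultimately show ?thesis using hz[of c] inV[of c] cm cr by force
  next
    case 2
    then have "(c + 1) mod 3 = 1" by (simp add: mod_Suc)
    then have "f0 m (c + 1, 0) = 2" using 2 by (simp add: f0_def)
    moreover have "dd (c, r) (c + 1, 0) \<le> 2" by (simp add: dd_def)
    ultimately show ?thesis using hz[of "c + 1"] inV[of "c + 1"] 2 cr by force
  next
    case 3
    then have "f0 m (c, 0) = 1" using cm by (simp add: f0_def)
    moreover have "dd (c, r) (c, 0) \<le> 1" by (simp add: dd_def)
    ultimately show ?thesis using hz[of c] inV[of c] cm cr by force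
  next
    case 4
    then obtain k where k: "c = Suc k" by (cases c) auto
    then have c1: "c \<ge> 1" "(c - 1) mod 3 = 1" using 4 mod_Suc[of k 3] by (auto split: if_splits)
    then have "f0 m (c - 1, 0) = 2" using cm by (simp add: f0_def)
    moreover have "dd (c, r) (c - 1, 0) \<le> 2" using c1 by (simp add: dd_def)
    moreover have "c - 1 < m" using cm by simp
    ultimately show ?thesis using hz[of "c - 1"] inV[of "c - 1"] cr by force
  qed
qed

lemma gsum: "3 * (\<Sum>c<n. if c mod 3 = 1 then 2 else 0::nat) + 2 * (if n mod 3 = 1 then 1 else 0) = 2 * n + 2 * (if n mod 3 = 2 then 1 else 0)"
proof (induction n)
  case 0 then show ?case by simp
next
  case (Suc n)
  consider "n mod 3 = 0" | "n mod 3 = 1" | "n mod 3 = 2" by linarith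
  then show ?case
  proof cases
    case 1
    then have "Suc n mod 3 = 1" by (simp add: mod_Suc)
    then show ?thesis using Suc 1 by simp
  next
    case 2
    then have "Suc n mod 3 = 2" by (simp add: mod_Suc)
    then show ?thesis using Suc 2 by simp
  next
    case 3
    then have "Suc n mod 3 = 0" by (simp add: mod_Suc)
    then show ?thesis using Suc 3 by simp
  qed
qed

lemma f0_cost:
  assumes "m \<ge> 1"
  shows "3 * bcost (GV m) (f0 m) \<le> 2 * m + 2"
proof -
  obtain n where mn: "m = Suc n" using assms by (cases m) auto
  have "bcost (GV m) (f0 m) = (\<Sum>c<m. \<Sum>r<3. f0 m (c, r))"
    unfolding bcost_def GV_eq by (simp add: sum.cartesian_product atLeast0LessThan)
  also have "\<dots> = (\<Sum>c<m. f0 m (c, 0))"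
    by (rule sum.cong) (auto simp: sum3 f0_def)
  also have "\<dots> = f0 m (n, 0) + (\<Sum>c<n. f0 m (c, 0))" unfolding mn by simp
  also have "(\<Sum>c<n. f0 m (c, 0)) = (\<Sum>c<n. if c mod 3 = 1 then 2 else 0)"
    by (rule sum.cong) (auto simp: f0_def mn)
  finally have eq: "bcost (GV m) (f0 m) = f0 m (n, 0) + (\<Sum>c<n. if c mod 3 = 1 then 2 else 0)" .
  have g: "3 * (\<Sum>c<n. if c mod 3 = 1 then 2 else 0::nat) + 2 * (if n mod 3 = 1 then 1 else 0) = 2 * n + 2 * (if n mod 3 = 2 then 1 else 0)"
    by (rule gsum)
  consider "n mod 3 = 0" | "n mod 3 = 1" | "n mod 3 = 2" by linarith
  then show ?thesis
  proof cases
    case 1 then show ?thesis using g eq mn by (simp add: f0_def)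
  next
    case 2 then show ?thesis using g eq mn by (simp add: f0_def)
  next
    case 3 then show ?thesis using g eq mn by (simp add: f0_def)
  qed
qed

theorem corollary4p2:
  fixes m :: nat
  assumes "m \<ge> 3"
  shows "int (gamma_b2 (cart_V (path_V m) (cycle_V 3)) (cart_E path_E (cycle_E 3)))
         = ceiling (2 * real m / 3)"
proof -
  let ?P = "\<lambda>c. \<exists>f. dominating_2lb (GV m) GE f \<and> bcost (GV m) f = c"
  have P0: "?P (bcost (GV m) (f0 m))" using f0_dom by blast
  have le: "gamma_b2 (GV m) GE \<le> bcost (GV m) (f0 m)"
    unfolding gamma_b2_def by (rule Least_le) (rule P0)
  have "?P (gamma_b2 (GV m) GE)" unfolding gamma_b2_def by (rule LeastI[of ?P, OF P0])
  then obtain f where f: "dominating_2lb (GV m) GE f" "bcost (GV m) f = gamma_b2 (GV m) GE" by blast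
  have lo: "2 * m \<le> 3 * gamma_b2 (GV m) GE" using lower[OF f(1)] f(2) by simp
  have hi: "3 * gamma_b2 (GV m) GE \<le> 2 * m + 2" using le f0_cost[of m] assms by linarith
  show ?thesis
  proof (rule ceiling_unique[symmetric])
    show "real_of_int (int (gamma_b2 (GV m) GE)) - 1 < 2 * real m / 3" using hi by linarith
    show "2 * real m / 3 \<le> real_of_int (int (gamma_b2 (GV m) GE))" using lo by linarith
  qed
qed

end
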